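(* Let $d\ge 1$ and let $\mathcal{G}'$ be a $d$-tree decomposition with $\mathcal{G}'\neq\mathcal{K}_1$. Then there exists a $d$-tree decomposition $\mathcal{G}$ such that $\mathcal{G}'$ is obtained from $\mathcal{G}$ by a $d$-tree $j$-extension for some $0\le j\le d-1$.
   Context: A multi-graph is finite and loop-free, possibly with parallel edges. A $d$-tree decomposition is a tuple $\mathcal{G}=(G;T_1,\ldots,T_d)$ where $G$ is a multi-graph and $T_1,\ldots,T_d$ are spanning trees of $G$ whose edge sets partition $E(G)$ (distinct parallel edges are distinct edges). By convention, $\mathcal{K}_1=(K_1;T_1,\ldots,T_d)$, where $K_1$ is the graph with one vertex and no edges and all $T_i$ are edgeless, is a $d$-tree decomposition. For a multi-graph $G$, a $d$-dimensional $j$-extension forms $G'$ by deleting a set $F$ of $j$ edges of $G$ and adding a new vertex $v$ together with $d+j$ new edges joining $v$ to vertices of $G$ (parallel new edges allowed), such that every endpoint of an edge of $F$ is a neighbour of $v$ in $G'$ (for $d=1$ any $j\ge0$ is allowed). A $d$-tree decomposition $\mathcal{G}'=(G';T_1',\ldots,T_d')$ is obtained from $\mathcal{G}=(G;T_1,\ldots,T_d)$ by a $d$-tree $j$-extension ($0\le j\le d-1$) if $G'$ is obtained from $G$ by a $d$-dimensional $j$-extension adding a new vertex $v$, and for each $i$, $T_i'$ is obtained from $T_i$ by a $1$-dimensional $k_i$-extension adding the same vertex $v$, for some $0\le k_i\le d-1$ (so $\sum_i k_i=j$). *)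

theory Defs
  imports Main "HOL-Library.Multiset"
begin

text \<open>A multi-graph on vertex set V is given by a multiset E of edges; each edge is a
  two-element vertex set (loop-free). Parallel edges = multiplicity > 1.\<close>

definition is_mgraph :: "'v set \<Rightarrow> 'v set multiset \<Rightarrow> bool" where
  "is_mgraph V E \<longleftrightarrow> finite V \<and>
     (\<forall>e\<in>#E. \<exists>a b. e = {a, b} \<and> a \<noteq> b \<and> a \<in> V \<and> b \<in> V)"

definition adj :: "'v set multiset \<Rightarrow> ('v \<times> 'v) set" where
  "adj E = {(a, b). {a, b} \<in># E}"

definition mconnected :: "'v set \<Rightarrow> 'v set multiset \<Rightarrow> bool" where
  "mconnected V E \<longleftrightarrow> V \<noteq> {} \<and> (\<forall>a\<in>V. \<forall>b\<in>V. (a, b) \<in> (adj E)\<^sup>*)"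

text \<open>A tree: a connected multi-graph in which every edge is a bridge (no edge lies on a
  cycle, i.e. acyclic; in particular no parallel edges).\<close>
definition is_tree :: "'v set \<Rightarrow> 'v set multiset \<Rightarrow> bool" where
  "is_tree V T \<longleftrightarrow> is_mgraph V T \<and> mconnected V T \<and>
     (\<forall>e\<in>#T. \<not> mconnected V (T - {#e#}))"

definition spanning_tree :: "'v set \<Rightarrow> 'v set multiset \<Rightarrow> 'v set multiset \<Rightarrow> bool" where
  "spanning_tree V E T \<longleftrightarrow> is_tree V T \<and> T \<subseteq># E"

definition dtree_decomp :: "nat \<Rightarrow> 'v set \<Rightarrow> 'v set multiset \<Rightarrow> (nat \<Rightarrow> 'v set multiset) \<Rightarrow> bool" where
  "dtree_decomp d V E Ts \<longleftrightarrow> is_mgraph V E \<and> (\<forall>i<d. spanning_tree V E (Ts i)) \<and>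
     E = (\<Sum>i<d. Ts i)"

definition mext :: "nat \<Rightarrow> nat \<Rightarrow> 'v set \<Rightarrow> 'v set multiset \<Rightarrow> 'v set \<Rightarrow> 'v set multiset \<Rightarrow> 'v \<Rightarrow> bool" where
  "mext d j V E V' E' v \<longleftrightarrow> v \<notin> V \<and> V' = insert v V \<and>
     (\<exists>F N. F \<subseteq># E \<and> size F = j \<and> size N = d + j \<and>
        (\<forall>e\<in>#N. \<exists>u\<in>V. e = {v, u}) \<and> E' = (E - F) + N \<and>
        (\<forall>e\<in>#F. \<forall>w\<in>e. {v, w} \<in># E'))"

definition dtree_ext :: "nat \<Rightarrow> nat \<Rightarrow> 'v set \<Rightarrow> 'v set multiset \<Rightarrow> (nat \<Rightarrow> 'v set multiset)
    \<Rightarrow> 'v set \<Rightarrow> 'v set multiset \<Rightarrow> (nat \<Rightarrow> 'v set multiset) \<Rightarrow> bool" where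
  "dtree_ext d j V E Ts V' E' Ts' \<longleftrightarrow> j \<le> d - 1 \<and>
     (\<exists>v. mext d j V E V' E' v \<and>
        (\<forall>i<d. \<exists>k. k \<le> d - 1 \<and> mext 1 k V (Ts i) V' (Ts' i) v))"

end

theory Submission
  imports Defs
begin

lemma adj_sym: "(x,y) \<in> adj E \<Longrightarrow> (y,x) \<in> adj E"
  by (simp add: adj_def insert_commute)

lemma adj_rtrancl_sym: "(x,y) \<in> (adj E)\<^sup>* \<Longrightarrow> (y,x) \<in> (adj E)\<^sup>*"
proof (induction rule: rtrancl_induct)
  case base then show ?case by simp
next
  case (step y z)
  then show ?case using adj_sym by (meson converse_rtrancl_into_rtrancl)
qed

lemma adj_mono: "A \<subseteq># B \<Longrightarrow> adj A \<subseteq> adj B"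
  by (auto simp: adj_def dest: mset_subset_eqD)

lemma rtr_mono: "A \<subseteq># B \<Longrightarrow> (x,y) \<in> (adj A)\<^sup>* \<Longrightarrow> (x,y) \<in> (adj B)\<^sup>*"
  using adj_mono rtrancl_mono by blast

lemma mg_edge: "is_mgraph V E \<Longrightarrow> {x,y} \<in># E \<Longrightarrow> x \<in> V \<and> y \<in> V \<and> x \<noteq> y"
proof -
  assume g: "is_mgraph V E" and e: "{x,y} \<in># E"
  from g have "\<forall>e\<in>#E. \<exists>a b. e = {a,b} \<and> a \<noteq> b \<and> a \<in> V \<and> b \<in> V" unfolding is_mgraph_def by (rule conjunct2)
  then obtain a b where ab: "{x,y} = {a,b}" "a\<noteq>b" "a\<in>V" "b\<in>V" using e by metis
  then show ?thesis by (auto simp: doubleton_eq_iff)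
qed

lemma ex2I: "e = {x,y} \<Longrightarrow> x\<noteq>y \<Longrightarrow> x\<in>A \<Longrightarrow> y\<in>A \<Longrightarrow> \<exists>a b. e = {a,b} \<and> a\<noteq>b \<and> a\<in>A \<and> b\<in>A"
  by blast

lemma closed_filter:
  assumes cl: "\<And>x y. (x,y) \<in> adj G \<Longrightarrow> x \<in> S \<Longrightarrow> y \<in> S"
    and "(x,y) \<in> (adj G)\<^sup>*" and "x \<in> S"
  shows "(x,y) \<in> (adj (filter_mset (\<lambda>e. e \<subseteq> S) G))\<^sup>* \<and> y \<in> S"
  using assms(2)
proof (induction rule: rtrancl_induct)
  case base then show ?case using assms(3) by simp
next
  case (step y z)
  then have "z \<in> S" using cl by blast
  moreover have "(y,z) \<in> adj (filter_mset (\<lambda>e. e \<subseteq> S) G)"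
    using step \<open>z \<in> S\<close> by (simp add: adj_def)
  ultimately show ?case using step by (meson rtrancl.rtrancl_into_rtrancl)
qed

lemma split_closed:
  assumes g: "is_mgraph V G" and AV: "A \<subseteq> V"
    and cl: "\<And>x y. (x,y) \<in> adj G \<Longrightarrow> x \<in> A \<Longrightarrow> y \<in> A"
  shows "G = filter_mset (\<lambda>e. e \<subseteq> A) G + filter_mset (\<lambda>e. e \<subseteq> V - A) G"
    and "is_mgraph A (filter_mset (\<lambda>e. e \<subseteq> A) G)"
    and "is_mgraph (V - A) (filter_mset (\<lambda>e. e \<subseteq> V - A) G)"
    and "\<And>x y. (x,y) \<in> adj G \<Longrightarrow> x \<in> V - A \<Longrightarrow> y \<in> V - A"
proof -
  have ed: "\<forall>e\<in>#G. \<exists>x y. e = {x,y} \<and> x \<noteq> y \<and> x \<in> V \<and> y \<in> V" using g unfolding is_mgraph_def by (rule conjunct2)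
  have c2: "(\<not> e \<subseteq> A) = (e \<subseteq> V - A)" if eG: "e \<in># G" for e
  proof -
    obtain x y where xy: "e = {x,y}" "x \<noteq> y" "x \<in> V" "y \<in> V" using bspec[OF ed eG] by (elim exE conjE)
    have 1: "(x,y) \<in> adj G" using eG xy(1) by (simp add: adj_def)
    have 2: "(y,x) \<in> adj G" using adj_sym[OF 1] .
    have "x \<in> A \<longleftrightarrow> y \<in> A" using cl[OF 1] cl[OF 2] by blast
    then show ?thesis using xy by auto
  qed
  have eq: "filter_mset (\<lambda>e. \<not> e \<subseteq> A) G = filter_mset (\<lambda>e. e \<subseteq> V - A) G"
    using c2 by (intro filter_mset_cong) auto
  have p: "G = filter_mset (\<lambda>e. e \<subseteq> A) G + filter_mset (\<lambda>e. \<not> e \<subseteq> A) G"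
    by (rule multiset_partition)
  show "G = filter_mset (\<lambda>e. e \<subseteq> A) G + filter_mset (\<lambda>e. e \<subseteq> V - A) G"
    using p unfolding eq .
  have fin: "finite V" using g by (simp add: is_mgraph_def)
  show "is_mgraph A (filter_mset (\<lambda>e. e \<subseteq> A) G)"
    unfolding is_mgraph_def
  proof (intro conjI ballI)
    show "finite A" using fin AV finite_subset by blast
    fix e assume "e \<in># filter_mset (\<lambda>e. e \<subseteq> A) G"
    then have eG: "e \<in># G" and "e \<subseteq> A" by auto
    obtain x y where xy: "e = {x,y}" "x \<noteq> y" using bspec[OF ed eG] by (elim exE conjE)
    have "x \<in> A" "y \<in> A" using xy \<open>e \<subseteq> A\<close> by auto
    then show "\<exists>a b. e = {a, b} \<and> a \<noteq> b \<and> a \<in> A \<and> b \<in> A" by (rule ex2I[OF xy])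
  qed
  show "is_mgraph (V - A) (filter_mset (\<lambda>e. e \<subseteq> V - A) G)"
    unfolding is_mgraph_def
  proof (intro conjI ballI)
    show "finite (V - A)" using fin by blast
    fix e assume "e \<in># filter_mset (\<lambda>e. e \<subseteq> V - A) G"
    then have eG: "e \<in># G" and "e \<subseteq> V - A" by auto
    obtain x y where xy: "e = {x,y}" "x \<noteq> y" using bspec[OF ed eG] by (elim exE conjE)
    have "x \<in> V - A" "y \<in> V - A" using xy \<open>e \<subseteq> V - A\<close> by auto
    then show "\<exists>a b. e = {a, b} \<and> a \<noteq> b \<and> a \<in> V - A \<and> b \<in> V - A" by (rule ex2I[OF xy])
  qed
  show "\<And>x y. (x,y) \<in> adj G \<Longrightarrow> x \<in> V - A \<Longrightarrow> y \<in> V - A"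
  proof -
    fix x y assume xy: "(x,y) \<in> adj G" "x \<in> V - A"
    then have "y \<in> V" using mg_edge[OF g] by (auto simp: adj_def)
    moreover have "y \<notin> A" using cl[OF adj_sym[OF xy(1)]] xy(2) by blast
    ultimately show "y \<in> V - A" by blast
  qed
qed

lemma conn_size:
  assumes "is_mgraph V E" "mconnected V E"
  shows "card V \<le> size E + 1"
  using assms
proof (induction "size E" arbitrary: V E rule: less_induct)
  case less
  have fin: "finite V" using less.prems by (simp add: is_mgraph_def)
  show ?case
  proof (cases "E = {#}")
    case True
    then have "\<forall>a\<in>V. \<forall>b\<in>V. a = b" using less.prems by (simp add: mconnected_def adj_def)
    then have "card V \<le> 1" using card_le_Suc0_iff_eq fin by auto
    then show ?thesis by simp
  next
    case False
    then obtain e where e: "e \<in># E" by (meson multiset_nonemptyE)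
    then obtain a b where ab: "e = {a,b}" "a \<noteq> b" "a \<in> V" "b \<in> V"
      using bspec[OF conjunct2[OF less.prems(1)[unfolded is_mgraph_def]] e] by (elim exE conjE)
    define E0 where "E0 = E - {#e#}"
    have "0 < size E" using e by (metis gr0I size_eq_0_iff_empty empty_iff set_mset_empty)
    then have sz: "size E0 < size E" "size E = Suc (size E0)" using e
      by (simp_all add: E0_def size_Diff_singleton)
    have g0: "is_mgraph V E0" using less.prems(1) by (auto simp: is_mgraph_def E0_def dest: in_diffD)
    show ?thesis
    proof (cases "mconnected V E0")
      case True
      then show ?thesis using less.hyps[OF sz(1) g0] sz by simp
    next
      case False
      define A where "A = {x\<in>V. (a,x) \<in> (adj E0)\<^sup>*}"
      have cover: "(a,y) \<in> (adj E0)\<^sup>* \<or> (b,y) \<in> (adj E0)\<^sup>*" if "(a,y) \<in> (adj E)\<^sup>*" for y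
        using that
      proof (induction rule: rtrancl_induct)
        case base then show ?case by simp
      next
        case (step y z)
        show ?case
        proof (cases "{y,z} = e")
          case True
          have "z \<in> {y,z}" by simp
          then have "z \<in> {a,b}" using True ab by simp
          then have "z = a \<or> z = b" by simp
          then show ?thesis by auto
        next
          case False
          then have "(y,z) \<in> adj E0" using step(2) by (simp add: adj_def E0_def in_diff_count)
          then show ?thesis using step(3) by (meson rtrancl.rtrancl_into_rtrancl)
        qed
      qed
      have conE: "(a,y) \<in> (adj E)\<^sup>*" if "y \<in> V" for y
        using less.prems(2) ab that by (simp add: mconnected_def)
      have bA: "b \<notin> A"
      proof
        assume "b \<in> A"
        then have ab0: "(a,b) \<in> (adj E0)\<^sup>*" by (simp add: A_def)
        have ay: "(a,y) \<in> (adj E0)\<^sup>*" if "y \<in> V" for y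
          using cover[OF conE[OF that]] ab0 by (meson rtrancl_trans)
        have "mconnected V E0" unfolding mconnected_def
        proof (intro conjI ballI)
          show "V \<noteq> {}" using ab by auto
          fix x y assume "x \<in> V" "y \<in> V"
          then show "(x,y) \<in> (adj E0)\<^sup>*" using ay adj_rtrancl_sym by (meson rtrancl_trans)
        qed
        then show False using False by simp
      qed
      have AV: "A \<subseteq> V" by (auto simp: A_def)
      have clA: "\<And>x y. (x,y) \<in> adj E0 \<Longrightarrow> x \<in> A \<Longrightarrow> y \<in> A"
      proof -
        fix x y assume that: "(x,y) \<in> adj E0" "x \<in> A"
        have "y \<in> V" using mg_edge[OF g0] that(1) by (auto simp: adj_def)
        then show "y \<in> A" using that by (auto simp: A_def intro: rtrancl_into_rtrancl)
      qed
      note sp = split_closed[OF g0 AV clA]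
      define EA where "EA = filter_mset (\<lambda>e. e \<subseteq> A) E0"
      define EB where "EB = filter_mset (\<lambda>e. e \<subseteq> V - A) E0"
      have aA: "a \<in> A" using ab by (simp add: A_def)
      have cA: "mconnected A EA" unfolding mconnected_def
      proof (intro conjI ballI)
        show "A \<noteq> {}" using aA by auto
        fix x y assume xy: "x \<in> A" "y \<in> A"
        have cf: "(a,z) \<in> (adj EA)\<^sup>*" if "z \<in> A" for z
        proof -
          have "(a,z) \<in> (adj E0)\<^sup>*" using that by (simp add: A_def)
          from conjunct1[OF closed_filter[OF clA this aA]] show ?thesis unfolding EA_def .
        qed
        show "(x,y) \<in> (adj EA)\<^sup>*" using rtrancl_trans[OF adj_rtrancl_sym[OF cf[OF xy(1)]] cf[OF xy(2)]] .
      qed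
      have bB: "b \<in> V - A" using bA ab by auto
      have cB: "mconnected (V - A) EB" unfolding mconnected_def
      proof (intro conjI ballI)
        show "V - A \<noteq> {}" using bB by auto
        fix x y assume xy: "x \<in> V - A" "y \<in> V - A"
        have bx: "(b,x) \<in> (adj E0)\<^sup>*" "(b,y) \<in> (adj E0)\<^sup>*"
          using cover[OF conE] xy by (auto simp: A_def)
        have 1: "(b,x) \<in> (adj EB)\<^sup>*" using conjunct1[OF closed_filter[OF sp(4) bx(1) bB]] unfolding EB_def .
        have 2: "(b,y) \<in> (adj EB)\<^sup>*" using conjunct1[OF closed_filter[OF sp(4) bx(2) bB]] unfolding EB_def .
        show "(x,y) \<in> (adj EB)\<^sup>*" using rtrancl_trans[OF adj_rtrancl_sym[OF 1] 2] .
      qed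
      have "size E0 = size (EA + EB)" using sp(1) unfolding EA_def EB_def by (rule arg_cong)
      then have se: "size E0 = size EA + size EB" by simp
      have hA: "card A \<le> size EA + 1"
        using less.hyps[of EA A] se sz sp(2) cA unfolding EA_def by simp
      have hB: "card (V - A) \<le> size EB + 1"
        using less.hyps[of EB "V - A"] se sz sp(3) cB unfolding EB_def by simp
      have "card V = card A + card (V - A)" using fin AV
        proof -
    have fA: "finite A" using finite_subset[OF AV fin] .
    have "card (V - A) = card V - card A" by (rule card_Diff_subset[OF fA AV])
    moreover have "card A \<le> card V" by (rule card_mono[OF fin AV])
    ultimately show ?thesis by simp
  qed
      then show ?thesis using hA hB se sz by simp
    qed
  qed
qed

definition acyc :: "'v set multiset \<Rightarrow> bool" where
  "acyc E \<longleftrightarrow> (\<forall>e\<in>#E. \<forall>a b. e = {a,b} \<longrightarrow> (a,b) \<notin> (adj (E - {#e#}))\<^sup>*)"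

lemma acyc_mono: "F \<subseteq># E \<Longrightarrow> acyc E \<Longrightarrow> acyc F"
  unfolding acyc_def
proof (intro ballI allI impI notI)
  fix e a b
  assume FE: "F \<subseteq># E" and ac: "\<forall>e\<in>#E. \<forall>a b. e = {a, b} \<longrightarrow> (a, b) \<notin> (adj (E - {#e#}))\<^sup>*"
    and e: "e \<in># F" and ab: "e = {a,b}" and p: "(a, b) \<in> (adj (F - {#e#}))\<^sup>*"
  have "F - {#e#} \<subseteq># E - {#e#}" using FE by (metis diff_subset_eq_self diff_zero insert_DiffM2 subset_eq_diff_conv subset_mset.dual_order.trans)
  then have 1: "(a, b) \<in> (adj (E - {#e#}))\<^sup>*" by (rule rtr_mono[OF _ p])
  have eE: "e \<in># E" using e FE by (rule mset_subset_eqD[rotated])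
  have 2: "(a, b) \<notin> (adj (E - {#e#}))\<^sup>*" using ac[rule_format, OF eE ab] .
  show False using 1 2 by contradiction
qed

lemma tree_acyc: "is_tree V T \<Longrightarrow> acyc T"
  unfolding acyc_def
proof (intro ballI allI impI notI)
  fix e a b
  assume t: "is_tree V T" and e: "e \<in># T" and ab: "e = {a,b}" and p: "(a, b) \<in> (adj (T - {#e#}))\<^sup>*"
  have sub: "adj T \<subseteq> (adj (T - {#e#}))\<^sup>*"
  proof
    fix pq assume "pq \<in> adj T"
    then obtain p q where pq: "pq = (p,q)" "{p,q} \<in># T" by (auto simp: adj_def)
    show "pq \<in> (adj (T - {#e#}))\<^sup>*"
    proof (cases "{p,q} = e")
      case True
      then have "(p = a \<and> q = b) \<or> (p = b \<and> q = a)" using ab by (simp add: doubleton_eq_iff)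
      then show ?thesis
      proof
        assume "p = a \<and> q = b" then show ?thesis using p pq by simp
      next
        assume "p = b \<and> q = a" then show ?thesis using adj_rtrancl_sym[OF p] pq by simp
      qed
    next
      case False
      then have "{p,q} \<in># T - {#e#}" using pq(2) by (simp add: in_diff_count)
      then have "(p,q) \<in> adj (T - {#e#})" by (simp add: adj_def)
      then show ?thesis using pq by (simp add: r_into_rtrancl)
    qed
  qed
  have "mconnected V (T - {#e#})" unfolding mconnected_def
  proof (intro conjI ballI)
    show "V \<noteq> {}" using t by (simp add: is_tree_def mconnected_def)
    fix x y assume "x \<in> V" "y \<in> V"
    then have "(x,y) \<in> (adj T)\<^sup>*" using t by (simp add: is_tree_def mconnected_def)
    then show "(x,y) \<in> (adj (T - {#e#}))\<^sup>*" by (rule subsetD[OF rtrancl_subset_rtrancl[OF sub]])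
  qed
  then show False using t e unfolding is_tree_def by blast
qed

lemma acyc_size:
  assumes "is_mgraph V E" "acyc E" "V \<noteq> {}"
  shows "size E + 1 \<le> card V"
  using assms
proof (induction "card V" arbitrary: V E rule: less_induct)
  case less
  have fin: "finite V" using less.prems by (simp add: is_mgraph_def)
  show ?case
  proof (cases "E = {#}")
    case True then show ?thesis using fin less.prems(3) by (simp add: Suc_leI card_gt_0_iff)
  next
    case False
    then obtain e where e: "e \<in># E" by (meson multiset_nonemptyE)
    then obtain a b where ab: "e = {a,b}" "a \<noteq> b" "a \<in> V" "b \<in> V"
      using bspec[OF conjunct2[OF less.prems(1)[unfolded is_mgraph_def]] e] by (elim exE conjE)
    define E0 where "E0 = E - {#e#}"
    have "0 < size E" using e by (metis gr0I size_eq_0_iff_empty empty_iff set_mset_empty)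
    then have sz: "size E = Suc (size E0)" using e
      by (simp_all add: E0_def size_Diff_singleton)
    have g0: "is_mgraph V E0" using less.prems(1) by (auto simp: is_mgraph_def E0_def dest: in_diffD)
    have nab: "(a,b) \<notin> (adj E0)\<^sup>*" using less.prems(2) e ab by (simp add: acyc_def E0_def)
    define A where "A = {x\<in>V. (a,x) \<in> (adj E0)\<^sup>*}"
    have AV: "A \<subseteq> V" by (auto simp: A_def)
    have clA: "\<And>x y. (x,y) \<in> adj E0 \<Longrightarrow> x \<in> A \<Longrightarrow> y \<in> A"
    proof -
      fix x y assume that: "(x,y) \<in> adj E0" "x \<in> A"
      have "y \<in> V" using mg_edge[OF g0] that(1) by (auto simp: adj_def)
      then show "y \<in> A" using that by (auto simp: A_def intro: rtrancl_into_rtrancl)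
    qed
    note sp = split_closed[OF g0 AV clA]
    define EA where "EA = filter_mset (\<lambda>e. e \<subseteq> A) E0"
    define EB where "EB = filter_mset (\<lambda>e. e \<subseteq> V - A) E0"
    have aA: "a \<in> A" using ab by (simp add: A_def)
    have bB: "b \<in> V - A" using nab ab by (simp add: A_def)
    have E0E: "E0 \<subseteq># E" by (simp add: E0_def)
    have "EA \<subseteq># E" unfolding EA_def by (rule subset_mset.order_trans[OF multiset_filter_subset E0E])
    then have acA: "acyc EA" using acyc_mono less.prems(2) by blast
    have "EB \<subseteq># E" unfolding EB_def by (rule subset_mset.order_trans[OF multiset_filter_subset E0E])
    then have acB: "acyc EB" using acyc_mono less.prems(2) by blast
    have "A \<subset> V" using AV bB by blast
    then have cA: "card A < card V" using fin by (rule psubset_card_mono[rotated])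
    have "V - A \<subset> V" using aA ab(3) by blast
    then have cB: "card (V - A) < card V" using fin by (rule psubset_card_mono[rotated])
    have "size E0 = size (EA + EB)" using sp(1) unfolding EA_def EB_def by (rule arg_cong)
    then have se: "size E0 = size EA + size EB" by simp
    have hA: "size EA + 1 \<le> card A"
    proof -
      have "is_mgraph A EA" unfolding EA_def by (rule sp(2))
      moreover have "A \<noteq> {}" using aA by blast
      ultimately show ?thesis using less.hyps[OF cA _ acA] by blast
    qed
    have hB: "size EB + 1 \<le> card (V - A)"
    proof -
      have "is_mgraph (V - A) EB" unfolding EB_def by (rule sp(3))
      moreover have "V - A \<noteq> {}" using bB by blast
      ultimately show ?thesis using less.hyps[OF cB _ acB] by blast
    qed
    have "card V = card A + card (V - A)" using fin AV
      proof -
    have fA: "finite A" using finite_subset[OF AV fin] .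
    have "card (V - A) = card V - card A" by (rule card_Diff_subset[OF fA AV])
    moreover have "card A \<le> card V" by (rule card_mono[OF fin AV])
    ultimately show ?thesis by simp
  qed
    then show ?thesis using hA hB se sz by simp
  qed
qed

lemma tree_size: "is_tree V T \<Longrightarrow> size T + 1 = card V"
proof -
  assume t: "is_tree V T"
  have g: "is_mgraph V T" and c: "mconnected V T" using t by (simp_all add: is_tree_def)
  have ne: "V \<noteq> {}" using c by (simp add: mconnected_def)
  have 1: "size T + 1 \<le> card V" by (rule acyc_size[OF g tree_acyc[OF t] ne])
  have 2: "card V \<le> size T + 1" by (rule conn_size[OF g c])
  show ?thesis using 1 2 by linarith
qed

lemma tree_of_count:
  assumes "is_mgraph V E" "mconnected V E" "size E + 1 = card V"
  shows "is_tree V E"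
  unfolding is_tree_def
proof (intro conjI ballI)
  fix e assume e: "e \<in># E"
  show "\<not> mconnected V (E - {#e#})"
  proof
    assume c: "mconnected V (E - {#e#})"
    have "is_mgraph V (E - {#e#})" using assms(1) by (auto simp: is_mgraph_def dest: in_diffD)
    from conn_size[OF this c] have "card V \<le> size (E - {#e#}) + 1" .
    moreover have "0 < size E" using e by (metis gr0I size_eq_0_iff_empty empty_iff set_mset_empty)
    ultimately show False using e assms(3) by (simp add: size_Diff_singleton)
  qed
qed (use assms in auto)

lemma handshake:
  assumes "finite V" "\<forall>e\<in>#E. \<exists>a b. e = {a,b} \<and> a \<noteq> b \<and> a \<in> V \<and> b \<in> V"
  shows "(\<Sum>x\<in>V. size (filter_mset (\<lambda>e. x \<in> e) E)) = 2 * size E"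
  using assms(2)
proof (induction E)
  case empty then show ?case by simp
next
  case (add e E)
  obtain a b where ab: "e = {a,b}" "a \<noteq> b" "a \<in> V" "b \<in> V" using add.prems by auto
  have "(\<Sum>x\<in>V. size (filter_mset (\<lambda>e'. x \<in> e') (add_mset e E)))
      = (\<Sum>x\<in>V. size (filter_mset (\<lambda>e'. x \<in> e') E) + (if x \<in> e then 1 else 0))"
    by (intro sum.cong) auto
  also have "\<dots> = (\<Sum>x\<in>V. size (filter_mset (\<lambda>e'. x \<in> e') E)) + card (V \<inter> e)"
    using assms(1) by (simp add: sum.distrib sum.If_cases)
  also have "card (V \<inter> e) = 2" using ab by (simp add: Int_absorb1)
  finally show ?case using add by simp
qed

lemma card_set_mset_le: "card (set_mset M) \<le> size M"
  by (induction M) (auto simp: card_insert_if)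

lemma surgery:
  assumes t: "is_tree V T" and v: "v \<in> V" and c2: "2 \<le> card V"
  shows "\<exists>F. size (filter_mset (\<lambda>e. v \<in> e) T) = Suc (size F) \<and> (\<forall>e\<in>#F. \<forall>w\<in>e. {v,w} \<in># T)
     \<and> is_tree (V - {v}) (filter_mset (\<lambda>e. v \<notin> e) T + F)"
proof -
  define N where "N = filter_mset (\<lambda>e. v \<in> e) T"
  define R where "R = filter_mset (\<lambda>e. v \<notin> e) T"
  have g: "is_mgraph V T" and conn: "mconnected V T" using t by (auto simp: is_tree_def)
  have fin: "finite V" using g by (simp add: is_mgraph_def)
  define Nb where "Nb = {w. {v,w} \<in># T}"
  have NbV: "Nb \<subseteq> V - {v}" using mg_edge[OF g] by (auto simp: Nb_def)
  have finNb: "finite Nb" using NbV fin finite_subset by blast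
  obtain w' where w': "w' \<in> V" "w' \<noteq> v"
  proof (rule ccontr)
    assume "\<not> thesis"
    then have "V \<subseteq> {v}" using that by blast
    then have "card V \<le> 1" using card_mono[of "{v}" V] by simp
    then show False using c2 by simp
  qed
  have "(v,w') \<in> (adj T)\<^sup>*" using conn v w' by (simp add: mconnected_def)
  then obtain y where "(v,y) \<in> adj T" using w'(2) by (metis converse_rtranclE)
  then have "y \<in> Nb" by (simp add: adj_def Nb_def)
  then obtain u0 where u0: "u0 \<in> Nb" by blast
  define F where "F = image_mset (\<lambda>u. {u0,u}) (mset_set (Nb - {u0}))"
  have Fmem: "e \<in># F \<longleftrightarrow> (\<exists>u\<in>Nb - {u0}. e = {u0,u})" for e
    using finNb by (auto simp: F_def)
  have sizeF: "size F = card Nb - 1" using finNb u0 by (simp add: F_def)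
  have cNb: "card Nb \<le> size N"
  proof -
    have inj: "inj_on (\<lambda>w. {v,w}) Nb" using NbV by (auto simp: inj_on_def doubleton_eq_iff)
    have "(\<lambda>w. {v,w}) ` Nb \<subseteq> set_mset N" by (auto simp: N_def Nb_def)
    then have "card Nb \<le> card (set_mset N)" using card_inj_on_le[OF inj] by simp
    also have "\<dots> \<le> size N" by (rule card_set_mset_le)
    finally show ?thesis .
  qed
  have TNR: "T = N + R" unfolding N_def R_def by (rule multiset_partition)
  have TRN: "T = R + N" using TNR add.commute[of N R] by (rule trans)
  have szT: "size T + 1 = card V" using tree_size[OF t] .
  define G2 where "G2 = R + F"
  have g2: "is_mgraph (V - {v}) G2"
    unfolding is_mgraph_def
  proof (intro conjI ballI)
    show "finite (V - {v})" using fin by simp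
    fix e assume "e \<in># G2"
    then consider "e \<in># R" | "e \<in># F" by (auto simp: G2_def)
    then show "\<exists>a b. e = {a, b} \<and> a \<noteq> b \<and> a \<in> V - {v} \<and> b \<in> V - {v}"
    proof cases
      case 1
      then have "e \<in># T" "v \<notin> e" by (auto simp: R_def)
      obtain x y where xy: "e = {x,y}" "x \<noteq> y" "x \<in> V" "y \<in> V"
        using bspec[OF conjunct2[OF g[unfolded is_mgraph_def]] \<open>e \<in># T\<close>] by (elim exE conjE)
      have "x \<in> V - {v}" "y \<in> V - {v}" using xy \<open>v \<notin> e\<close> by auto
      then show ?thesis by (rule ex2I[OF xy(1,2)])
    next
      case 2
      obtain u where u: "u \<in> Nb - {u0}" "e = {u0,u}" using Fmem[THEN iffD1, OF 2] by (elim bexE)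
      have "u0 \<noteq> u" "u0 \<in> V - {v}" "u \<in> V - {v}" using u u0 NbV by auto
      then show ?thesis by (rule ex2I[OF u(2)])
    qed
  qed
  have L0: "a = v" if "(a,v) \<in> (adj R)\<^sup>*" for a
    using that
  proof (cases rule: rtranclE)
    case (step y)
    then show ?thesis by (simp add: adj_def R_def)
  qed simp
  have L1: "(a,b) \<in> (adj R)\<^sup>* \<or> (\<exists>w\<in>Nb. (a,w) \<in> (adj R)\<^sup>*)" if "(a,b) \<in> (adj T)\<^sup>*" "a \<noteq> v" for a b
    using that(1)
  proof (induction rule: rtrancl_induct)
    case base then show ?case by simp
  next
    case (step b c)
    show ?case
    proof (cases "(a,b) \<in> (adj R)\<^sup>*")
      case False
      have "\<exists>w\<in>Nb. (a,w) \<in> (adj R)\<^sup>*" using step(3) False by simp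
      then show ?thesis by (rule disjI2)
    next
      case True
      have bv: "b \<noteq> v"
      proof
        assume "b = v"
        then have "a = v" using L0 True by simp
        then show False using that(2) by contradiction
      qed
      show ?thesis
      proof (cases "c = v")
        case True
        then have "b \<in> Nb" using step(2) by (simp add: adj_def Nb_def insert_commute)
        then have "\<exists>w\<in>Nb. (a,w) \<in> (adj R)\<^sup>*" using \<open>(a,b) \<in> (adj R)\<^sup>*\<close> by (rule bexI[rotated])
        then show ?thesis by (rule disjI2)
      next
        case False
        then have "(b,c) \<in> adj R" using step(2) bv by (simp add: adj_def R_def)
        then have "(a,c) \<in> (adj R)\<^sup>*" using True by (rule rtrancl.rtrancl_into_rtrancl[rotated])
        then show ?thesis by (rule disjI1)
      qed
    qed
  qed
  have RG: "R \<subseteq># G2" by (simp add: G2_def)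
  have Nbu: "(w,u0) \<in> (adj G2)\<^sup>*" if "w \<in> Nb" for w
  proof (cases "w = u0")
    case False
    then have "{u0,w} \<in># F" using Fmem that by auto
    then have "{u0,w} \<in># G2" by (simp add: G2_def)
    then have "(u0,w) \<in> adj G2" by (simp add: adj_def)
    then show ?thesis by (rule r_into_rtrancl[OF adj_sym])
  qed simp
  have toU: "(a,b) \<in> (adj G2)\<^sup>* \<or> (a,u0) \<in> (adj G2)\<^sup>*" if ab: "a \<in> V - {v}" "b \<in> V" for a b
  proof -
    have "a \<in> V" "a \<noteq> v" using ab by auto
    then have "(a,b) \<in> (adj T)\<^sup>*" using conn ab(2) by (simp add: mconnected_def)
    from L1[OF this \<open>a \<noteq> v\<close>] show ?thesis
    proof (rule disjE)
      assume "(a,b) \<in> (adj R)\<^sup>*"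
      then have "(a,b) \<in> (adj G2)\<^sup>*" by (rule rtr_mono[OF RG])
      then show ?thesis by (rule disjI1)
    next
      assume "\<exists>w\<in>Nb. (a,w) \<in> (adj R)\<^sup>*"
      then obtain w where w: "w \<in> Nb" "(a,w) \<in> (adj R)\<^sup>*" by (rule bexE)
      have "(a,u0) \<in> (adj G2)\<^sup>*" using rtrancl_trans[OF rtr_mono[OF RG w(2)] Nbu[OF w(1)]] .
      then show ?thesis by (rule disjI2)
    qed
  qed
  have c2': "mconnected (V - {v}) G2" unfolding mconnected_def
  proof (intro conjI ballI)
    show "V - {v} \<noteq> {}" using w' by blast
    fix a b assume ab: "a \<in> V - {v}" "b \<in> V - {v}"
    have 1: "(a,b) \<in> (adj G2)\<^sup>* \<or> (a,u0) \<in> (adj G2)\<^sup>*" using toU[of a b] ab by simp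
    have 2: "(b,a) \<in> (adj G2)\<^sup>* \<or> (b,u0) \<in> (adj G2)\<^sup>*" using toU[of b a] ab by simp
    show "(a,b) \<in> (adj G2)\<^sup>*"
    proof (cases "(a,b) \<in> (adj G2)\<^sup>*")
      case False
      then have au: "(a,u0) \<in> (adj G2)\<^sup>*" using 1 by simp
      show ?thesis
      proof (cases "(b,a) \<in> (adj G2)\<^sup>*")
        case True then show ?thesis by (rule adj_rtrancl_sym)
      next
        case False
        then have bu: "(b,u0) \<in> (adj G2)\<^sup>*" using 2 by simp
        show ?thesis using rtrancl_trans[OF au adj_rtrancl_sym[OF bu]] .
      qed
    qed simp
  qed
  have cs: "card (V - {v}) \<le> size G2 + 1" using conn_size[OF g2 c2'] .
  have cV: "card (V - {v}) = card V - 1" using v fin by simp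
  have sG2: "size G2 = size R + (card Nb - 1)" by (simp add: G2_def sizeF)
  have "size T = size (R + N)" using TRN by (rule arg_cong)
  then have sT: "size T = size R + size N" by simp
  have "Nb \<noteq> {}" using u0 by auto
  then have Nb1: "1 \<le> card Nb" using finNb by (simp add: Suc_leI card_gt_0_iff)
  have eqN: "card Nb = size N" using cs cV sG2 sT szT cNb Nb1 by linarith
  have eqG: "size G2 + 1 = card (V - {v})" using cs cV sG2 sT szT cNb Nb1 eqN by linarith
  have tr: "is_tree (V - {v}) G2" by (rule tree_of_count[OF g2 c2' eqG])
  have ends: "\<forall>e\<in>#F. \<forall>w\<in>e. {v,w} \<in># T" using Fmem u0 by (auto simp: Nb_def)
  show ?thesis
    using tr ends eqN sizeF Nb1 unfolding G2_def R_def N_def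
    by (intro exI[of _ F]) auto
qed

lemma filter_sum: "filter_mset P (\<Sum>i\<in>I. f i) = (\<Sum>i\<in>I. filter_mset P (f i))"
  by (induction I rule: infinite_finite_induct) auto

lemma size_sum: "size (\<Sum>i\<in>I. (f i :: 'a multiset)) = (\<Sum>i\<in>I. size (f i))"
  by (induction I rule: infinite_finite_induct) auto

lemma in_sum: "finite I \<Longrightarrow> x \<in># (\<Sum>i\<in>I. f i) \<Longrightarrow> \<exists>i\<in>I. x \<in># f i"
  by (simp add: set_mset_sum)

lemma sub_sum:
  assumes "finite I" "i \<in> I" shows "f i \<subseteq># (\<Sum>i\<in>I. f i)"
proof -
  have "(\<Sum>i\<in>I. f i) = f i + (\<Sum>i\<in>I - {i}. f i)" by (rule sum.remove[OF assms])
  then show ?thesis by (simp add: mset_subset_eq_add_left)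
qed

lemma star_edge:
  assumes g: "is_mgraph V T" and e: "e \<in># T" and v: "v \<in> e"
  shows "\<exists>u\<in>V - {v}. e = {v,u}"
proof -
  obtain a b where ab: "e = {a,b}" "a \<noteq> b" "a \<in> V" "b \<in> V"
    using bspec[OF conjunct2[OF g[unfolded is_mgraph_def]] e] by (elim exE conjE)
  show ?thesis
  proof (cases "a = v")
    case True
    then have "b \<in> V - {v}" "e = {v,b}" using ab by auto
    then show ?thesis by (rule bexI[rotated])
  next
    case False
    then have "b = v" using ab v by simp
    then have "a \<in> V - {v}" "e = {v,a}" using ab False by (auto simp: insert_commute)
    then show ?thesis by (rule bexI[rotated])
  qed
qed

theorem proposition3p4:
  fixes d :: nat and V' :: "'v set" and E' :: "'v set multiset"
    and Ts' :: "nat \<Rightarrow> 'v set multiset"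
  assumes "d \<ge> 1"
    and "dtree_decomp d V' E' Ts'"
    and "\<not> (\<exists>x. V' = {x} \<and> E' = {#} \<and> (\<forall>i<d. Ts' i = {#}))"
  shows "\<exists>V E Ts j. dtree_decomp d V E Ts \<and> j \<le> d - 1 \<and> dtree_ext d j V E Ts V' E' Ts'"
proof -
  have g': "is_mgraph V' E'" and sp: "\<forall>i<d. spanning_tree V' E' (Ts' i)" and Esum: "E' = (\<Sum>i<d. Ts' i)"
  proof -
    have c: "is_mgraph V' E' \<and> (\<forall>i<d. spanning_tree V' E' (Ts' i)) \<and> E' = (\<Sum>i<d. Ts' i)"
      using assms(2) unfolding dtree_decomp_def .
    show "is_mgraph V' E'" using c by (rule conjunct1)
    show "\<forall>i<d. spanning_tree V' E' (Ts' i)" using c by (elim conjE)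
    show "E' = (\<Sum>i<d. Ts' i)" using c by (elim conjE)
  qed
  have tr: "is_tree V' (Ts' i)" if "i < d" for i using sp that by (simp add: spanning_tree_def)
  have subE: "Ts' i \<subseteq># E'" if "i < d" for i using sp that by (simp add: spanning_tree_def)
  have t0: "is_tree V' (Ts' 0)" using tr assms(1) by simp
  have fin: "finite V'" using g' by (simp add: is_mgraph_def)
  have ne: "V' \<noteq> {}" using t0 by (simp add: is_tree_def mconnected_def)
  define n where "n = card V'"
  have szT: "size (Ts' i) + 1 = n" if "i < d" for i using tree_size[OF tr[OF that]] n_def by simp
  have c2: "2 \<le> n"
  proof (rule ccontr)
    assume "\<not> 2 \<le> n"
    moreover have "0 < card V'" using fin ne by (simp add: card_gt_0_iff)
    ultimately have "card V' = 1" unfolding n_def by simp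
    then obtain x where x: "V' = {x}" by (rule card_1_singletonE)
    have E0: "E' = {#}"
    proof (rule ccontr)
      assume "E' \<noteq> {#}"
      then obtain e where e: "e \<in># E'" by (meson multiset_nonemptyE)
      obtain a b where "e = {a,b}" "a \<noteq> b" "a \<in> V'" "b \<in> V'"
        using bspec[OF conjunct2[OF g'[unfolded is_mgraph_def]] e] by (elim exE conjE)
      then show False using x by simp
    qed
    have T0: "\<forall>i<d. Ts' i = {#}" using subE E0 by simp
    have "\<exists>x. V' = {x} \<and> E' = {#} \<and> (\<forall>i<d. Ts' i = {#})" using x E0 T0 by (intro exI[of _ x]) simp
    then show False using assms(3) by contradiction
  qed
  have c2': "2 \<le> card V'" using c2 n_def by simp
  have szE: "size E' = d * (n - 1)"
  proof -
    have "size E' = (\<Sum>i<d. size (Ts' i))" unfolding Esum by (rule size_sum)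
    also have "\<dots> = (\<Sum>i<d. n - 1)"
    proof (rule sum.cong)
      fix i assume "i \<in> {..<d}"
      then show "size (Ts' i) = n - 1" using szT[of i] by simp
    qed simp
    finally show ?thesis by simp
  qed
  have hs: "(\<Sum>x\<in>V'. size (filter_mset (\<lambda>e. x \<in> e) E')) = 2 * size E'"
    by (rule handshake[OF fin conjunct2[OF g'[unfolded is_mgraph_def]]])
  have "\<exists>v\<in>V'. size (filter_mset (\<lambda>e. v \<in> e) E') + 1 \<le> 2 * d"
  proof (rule ccontr)
    assume "\<not> ?thesis"
    then have ge: "\<And>x. x \<in> V' \<Longrightarrow> 2 * d \<le> size (filter_mset (\<lambda>e. x \<in> e) E')" by auto
    have "(\<Sum>x\<in>V'. 2 * d) \<le> (\<Sum>x\<in>V'. size (filter_mset (\<lambda>e. x \<in> e) E'))"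
      by (rule sum_mono) (rule ge)
    then have le: "n * (2 * d) \<le> 2 * (d * (n - 1))" using hs szE n_def by simp
    obtain m where m: "n = Suc m" using c2 by (cases n) auto
    show False using le assms(1) unfolding m by (simp add: algebra_simps)
  qed
  then obtain v where v: "v \<in> V'" "size (filter_mset (\<lambda>e. v \<in> e) E') + 1 \<le> 2 * d"
    by (elim bexE conjE)
  define N where "N i = filter_mset (\<lambda>e. v \<in> e) (Ts' i)" for i
  define R where "R i = filter_mset (\<lambda>e. v \<notin> e) (Ts' i)" for i
  have "\<forall>i. \<exists>F. i < d \<longrightarrow> (size (N i) = Suc (size F) \<and> (\<forall>e\<in>#F. \<forall>w\<in>e. {v,w} \<in># Ts' i)
     \<and> is_tree (V' - {v}) (R i + F))"
  proof
    fix i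
    show "\<exists>F. i < d \<longrightarrow> (size (N i) = Suc (size F) \<and> (\<forall>e\<in>#F. \<forall>w\<in>e. {v,w} \<in># Ts' i)
     \<and> is_tree (V' - {v}) (R i + F))"
    proof (cases "i < d")
      case True
      from surgery[OF tr[OF True] v(1) c2'] obtain F where
        "size (N i) = Suc (size F) \<and> (\<forall>e\<in>#F. \<forall>w\<in>e. {v,w} \<in># Ts' i)
         \<and> is_tree (V' - {v}) (R i + F)" unfolding N_def R_def by (elim exE)
      then show ?thesis by (intro exI[of _ F] impI)
    qed simp
  qed
  from choice[OF this] obtain Fs where Fs: "\<forall>i. i < d \<longrightarrow> (size (N i) = Suc (size (Fs i)) \<and> (\<forall>e\<in>#Fs i. \<forall>w\<in>e. {v,w} \<in># Ts' i)
     \<and> is_tree (V' - {v}) (R i + Fs i))" by (elim exE)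
  define k where "k i = size (Fs i)" for i
  define V where "V = V' - {v}"
  define Ts where "Ts i = R i + Fs i" for i
  define E where "E = (\<Sum>i<d. Ts i)"
  define F where "F = (\<Sum>i<d. Fs i)"
  define NN where "NN = (\<Sum>i<d. N i)"
  define j where "j = (\<Sum>i<d. k i)"
  have sN: "size (N i) = Suc (k i)" if "i < d" for i using Fs that k_def by simp
  have endp: "\<forall>e\<in>#Fs i. \<forall>w\<in>e. {v,w} \<in># Ts' i" if "i < d" for i using Fs that by simp
  have trT: "is_tree V (Ts i)" if "i < d" for i using Fs that unfolding V_def Ts_def by simp
  have part: "Ts' i = R i + N i" for i
  proof -
    have "Ts' i = N i + R i" unfolding N_def R_def by (rule multiset_partition)
    then show ?thesis using add.commute[of "N i" "R i"] by (rule trans)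
  qed
  have NE: "\<exists>u\<in>V. e = {v,u}" if "i < d" "e \<in># N i" for i e
  proof -
    have "e \<in># Ts' i" "v \<in> e" using that(2) by (simp_all add: N_def)
    moreover have "is_mgraph V' (Ts' i)" using tr[OF that(1)] by (simp add: is_tree_def)
    ultimately show ?thesis unfolding V_def by (intro star_edge)
  qed
  have dN: "size (filter_mset (\<lambda>e. v \<in> e) E') = (\<Sum>i<d. size (N i))"
    unfolding Esum filter_sum size_sum N_def ..
  have degv: "size (filter_mset (\<lambda>e. v \<in> e) E') = d + j"
  proof -
    have "size (filter_mset (\<lambda>e. v \<in> e) E') = (\<Sum>i<d. size (N i))" by (rule dN)
    also have "\<dots> = (\<Sum>i<d. Suc (k i))" by (rule sum.cong) (simp_all add: sN)
    also have "\<dots> = d + j" by (simp add: sum_Suc j_def)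
    finally show ?thesis .
  qed
  have jle: "j \<le> d - 1" using degv v(2) by simp
  have kle: "k i \<le> d - 1" if "i < d" for i
  proof -
    have "k i \<le> j" unfolding j_def by (rule member_le_sum) (use that in auto)
    then show ?thesis using jle by simp
  qed
  have ERF: "E = (\<Sum>i<d. R i) + F" unfolding E_def Ts_def F_def by (rule sum.distrib)
  have E'RN: "E' = (\<Sum>i<d. R i) + NN"
  proof -
    have "E' = (\<Sum>i<d. R i + N i)" unfolding Esum using part by simp
    then show ?thesis unfolding NN_def by (simp add: sum.distrib)
  qed
  have finV: "finite V" using fin by (simp add: V_def)
  have vV: "v \<notin> V" "V' = insert v V" using v(1) by (auto simp: V_def)
  have dd: "dtree_decomp d V E Ts"
    unfolding dtree_decomp_def
  proof (intro conjI allI impI)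
    show "is_mgraph V E" unfolding is_mgraph_def
    proof (intro conjI ballI)
      show "finite V" by (rule finV)
      fix e assume eE: "e \<in># E"
      from in_sum[OF finite_lessThan eE[unfolded E_def]] obtain i where i: "i \<in> {..<d}" "e \<in># Ts i" by (elim bexE)
      have gi: "is_mgraph V (Ts i)" using trT[of i] i(1) by (simp add: is_tree_def)
      show "\<exists>a b. e = {a, b} \<and> a \<noteq> b \<and> a \<in> V \<and> b \<in> V"
        using bspec[OF conjunct2[OF gi[unfolded is_mgraph_def]] i(2)] .
    qed
    fix i assume "i < d"
    then show "spanning_tree V E (Ts i)" unfolding spanning_tree_def E_def
      using trT sub_sum[of "{..<d}" i Ts] by simp
  next
    show "E = (\<Sum>i<d. Ts i)" by (rule E_def)
  qed
  have mx: "mext d j V E V' E' v"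
    unfolding mext_def
  proof (intro conjI)
    show "v \<notin> V" "V' = insert v V" by (rule vV(1), rule vV(2))
    have 1: "F \<subseteq># E" unfolding ERF by (rule mset_subset_eq_add_right)
    have 2: "size F = j" unfolding F_def j_def k_def by (rule size_sum)
    have 3: "size NN = d + j" unfolding NN_def size_sum using degv
      using dN by simp
    show "\<exists>F N. F \<subseteq># E \<and> size F = j \<and> size N = d + j \<and>
        (\<forall>e\<in>#N. \<exists>u\<in>V. e = {v, u}) \<and> E' = (E - F) + N \<and>
        (\<forall>e\<in>#F. \<forall>w\<in>e. {v, w} \<in># E')"
    proof (rule exI[of _ F], rule exI[of _ NN], intro conjI ballI)
      show "F \<subseteq># E" "size F = j" "size NN = d + j" by (rule 1, rule 2, rule 3)
      show "E' = (E - F) + NN" unfolding ERF using E'RN by simp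
    next
      fix e assume eE: "e \<in># NN"
      from in_sum[OF finite_lessThan eE[unfolded NN_def]] obtain i where i: "i \<in> {..<d}" "e \<in># N i" by (elim bexE)
      show "\<exists>u\<in>V. e = {v, u}" using NE[of i e] i by simp
    next
      fix e w assume e: "e \<in># F" and w: "w \<in> e"
      from in_sum[OF finite_lessThan e[unfolded F_def]] obtain i where i: "i \<in> {..<d}" "e \<in># Fs i" by (elim bexE)
      have "{v,w} \<in># Ts' i" using endp[of i] i w by simp
      then show "{v,w} \<in># E'" using subE[of i] i by (simp add: mset_subset_eqD)
    qed
  qed
  have mt: "\<exists>k. k \<le> d - 1 \<and> mext 1 k V (Ts i) V' (Ts' i) v" if i: "i < d" for i
  proof (rule exI[of _ "k i"], intro conjI)
    show "k i \<le> d - 1" by (rule kle[OF i])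
    show "mext 1 (k i) V (Ts i) V' (Ts' i) v"
      unfolding mext_def
    proof (intro conjI)
      show "v \<notin> V" "V' = insert v V" by (rule vV(1), rule vV(2))
      show "\<exists>F N. F \<subseteq># Ts i \<and> size F = k i \<and> size N = 1 + k i \<and>
        (\<forall>e\<in>#N. \<exists>u\<in>V. e = {v, u}) \<and> Ts' i = (Ts i - F) + N \<and>
        (\<forall>e\<in>#F. \<forall>w\<in>e. {v, w} \<in># Ts' i)"
      proof (rule exI[of _ "Fs i"], rule exI[of _ "N i"], intro conjI ballI)
        show "Fs i \<subseteq># Ts i" unfolding Ts_def by (rule mset_subset_eq_add_right)
        show "size (Fs i) = k i" by (simp add: k_def)
        show "size (N i) = 1 + k i" using sN[OF i] by simp
        show "Ts' i = (Ts i - Fs i) + N i" unfolding Ts_def using part[of i] by simp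
      next
        fix e assume "e \<in># N i"
        then show "\<exists>u\<in>V. e = {v, u}" by (rule NE[OF i])
      next
        fix e w assume "e \<in># Fs i" "w \<in> e"
        then show "{v,w} \<in># Ts' i" using endp[OF i] by simp
      qed
    qed
  qed
  have ext: "dtree_ext d j V E Ts V' E' Ts'"
    unfolding dtree_ext_def
  proof (intro conjI)
    show "j \<le> d - 1" by (rule jle)
    show "\<exists>v. mext d j V E V' E' v \<and> (\<forall>i<d. \<exists>k. k \<le> d - 1 \<and> mext 1 k V (Ts i) V' (Ts' i) v)"
      using mx mt by (intro exI[of _ v] conjI allI impI) simp_all
  qed
  have "dtree_decomp d V E Ts \<and> j \<le> d - 1 \<and> dtree_ext d j V E Ts V' E' Ts'"
    using dd jle ext by simp
  then show ?thesis by (intro exI[of _ V] exI[of _ E] exI[of _ Ts] exI[of _ j])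
qed

end
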